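(* Let $k\ge2$, let $X=\mathbb{P}^{n_1}\times\cdots\times\mathbb{P}^{n_k}$ (over $\mathbb{C}$) with $n_1=1$, and let $L=\mathcal{O}_X(d_1,\dots,d_k)$ with $d_i\ge1$ for all $i$. Then $\mathrm{s}_X(u)\le 2$ for all nonzero $u\in H^0(L)$, and equality holds for a general $u\in H^0(L)$.
   Context: Strength: for $u\in H^0(L)\setminus\{0\}$, $\mathrm{s}_X(u)$ is the minimal $r\ge1$ such that there exist line bundles $L_1,\dots,L_r,R_1,\dots,R_r$ on $X$, none isomorphic to $\mathcal{O}_X$, isomorphisms $\phi_i:L_i\otimes R_i\to L$, and sections $x_i\in H^0(L_i)$, $y_i\in H^0(R_i)$ with $u=\sum_i\phi_i(x_i\cdot y_i)$ (product of sections); $+\infty$ if none exists. *)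

theory Defs
  imports Complex_Main "HOL-Library.Poly_Mapping" "HOL-Library.Extended_Nat"
begin

text \<open>Multihomogeneous polynomials on X = P^{n_0} x ... x P^{n_{k-1}} (factors indexed 0..k-1).
  Variables are indexed by pairs (i,j), i < k the factor, j \<le> n i the homogeneous coordinate.\<close>

type_synonym mono = "(nat \<times> nat) \<Rightarrow>\<^sub>0 nat"
type_synonym cpoly = "mono \<Rightarrow>\<^sub>0 complex"

definition block_deg :: "(nat \<Rightarrow> nat) \<Rightarrow> mono \<Rightarrow> nat \<Rightarrow> nat" where
  "block_deg n m i = (\<Sum>j\<le>n i. Poly_Mapping.lookup m (i, j))"

definition mono_in :: "(nat \<Rightarrow> nat) \<Rightarrow> nat \<Rightarrow> mono \<Rightarrow> bool" where
  "mono_in n k m \<longleftrightarrow> Poly_Mapping.keys m \<subseteq> {(i, j). i < k \<and> j \<le> n i}"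

text \<open>H^0(X, O_X(a)) for a degree vector a in Z^k (only a 0 .. a (k-1) matter):
  multihomogeneous polynomials of multidegree a (only 0 if some a i < 0).\<close>
definition sections :: "(nat \<Rightarrow> nat) \<Rightarrow> nat \<Rightarrow> (nat \<Rightarrow> int) \<Rightarrow> cpoly set" where
  "sections n k a = {p. \<forall>m \<in> Poly_Mapping.keys p. mono_in n k m \<and> (\<forall>i<k. int (block_deg n m i) = a i)}"

text \<open>Pic X = Z^k via a \<mapsto> O_X(a); O_X(a) is trivial iff a = 0.\<close>
definition nontrivial_deg :: "nat \<Rightarrow> (nat \<Rightarrow> int) \<Rightarrow> bool" where
  "nontrivial_deg k a \<longleftrightarrow> (\<exists>i<k. a i \<noteq> 0)"

definition strength_decomp :: "(nat \<Rightarrow> nat) \<Rightarrow> nat \<Rightarrow> (nat \<Rightarrow> int) \<Rightarrow> cpoly \<Rightarrow> nat \<Rightarrow> bool" where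
  "strength_decomp n k d u r \<longleftrightarrow>
     (\<exists>(a :: nat \<Rightarrow> nat \<Rightarrow> int) (x :: nat \<Rightarrow> cpoly) (y :: nat \<Rightarrow> cpoly).
        (\<forall>t<r. nontrivial_deg k (a t) \<and> nontrivial_deg k (\<lambda>i. d i - a t i)
               \<and> x t \<in> sections n k (a t) \<and> y t \<in> sections n k (\<lambda>i. d i - a t i))
        \<and> u = (\<Sum>t<r. x t * y t))"

text \<open>Strength s_X(u): least r \<ge> 1 admitting a decomposition, \<infinity> if none (Inf {} = \<infinity> in enat).\<close>
definition strength :: "(nat \<Rightarrow> nat) \<Rightarrow> nat \<Rightarrow> (nat \<Rightarrow> int) \<Rightarrow> cpoly \<Rightarrow> enat" where
  "strength n k d u = Inf {enat r | r. r \<ge> 1 \<and> strength_decomp n k d u r}"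

text \<open>Polynomial functions on a coefficient space: a polynomial P whose variables are
  monomials, evaluated at a coefficient vector c.\<close>
definition eval_coord_poly :: "((mono \<Rightarrow>\<^sub>0 nat) \<Rightarrow>\<^sub>0 complex) \<Rightarrow> (mono \<Rightarrow> complex) \<Rightarrow> complex" where
  "eval_coord_poly P c = (\<Sum>e\<in>Poly_Mapping.keys P. Poly_Mapping.lookup P e * (\<Prod>v\<in>Poly_Mapping.keys e. c v ^ Poly_Mapping.lookup e v))"

end

theory Submission
  imports Defs "HOL-Library.FuncSet" "HOL-Library.Function_Algebras" "HOL-Computational_Algebra.Polynomial"
begin

definition fscale :: "complex \<Rightarrow> ('x \<Rightarrow> complex) \<Rightarrow> ('x \<Rightarrow> complex)" where
  "fscale c f = (\<lambda>x. c * f x)"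

global_interpretation fvs: vector_space fscale
  by unfold_locales (auto simp: fscale_def fun_eq_iff algebra_simps)

lemma fscale_apply: "fscale c f x = c * f x" by (simp add: fscale_def)

lemma sum_fun_apply: "(\<Sum>i\<in>A. (f i :: 'x \<Rightarrow> 'b::comm_monoid_add)) x = (\<Sum>i\<in>A. f i x)"
  by (induction A rule: infinite_finite_induct) auto

lemma dep_lemma:
  fixes Phi :: "'i \<Rightarrow> ('x \<Rightarrow> complex)"
  assumes fS: "finite S" and fT: "finite T" and cardlt: "card T < card S"
    and sp: "Phi ` S \<subseteq> fvs.span T"
  shows "\<exists>lam. (\<exists>i\<in>S. lam i \<noteq> 0) \<and> (\<forall>x. (\<Sum>i\<in>S. lam i * Phi i x) = 0)"
proof (cases "inj_on Phi S")
  case False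
  then obtain i j where ij: "i \<in> S" "j \<in> S" "i \<noteq> j" "Phi i = Phi j"
    unfolding inj_on_def by blast
  define lam where "lam = (\<lambda>l. if l = i then (1::complex) else if l = j then -1 else 0)"
  have "(\<Sum>l\<in>S. lam l * Phi l x) = 0" for x
  proof -
    have "(\<Sum>l\<in>S. lam l * Phi l x) = (\<Sum>l\<in>{i,j}. lam l * Phi l x)"
      by (rule sum.mono_neutral_right) (use fS ij in \<open>auto simp: lam_def\<close>)
    also have "\<dots> = 0" using ij by (simp add: lam_def)
    finally show ?thesis .
  qed
  then show ?thesis using ij by (auto simp: lam_def intro!: exI[of _ lam])
next
  case True
  have "card (Phi ` S) = card S" using True by (simp add: card_image)
  have "\<not> fvs.independent (Phi ` S)"
  proof
    assume "fvs.independent (Phi ` S)"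
    from fvs.independent_span_bound[OF fT this sp] have "card (Phi ` S) \<le> card T" by simp
    with \<open>card (Phi ` S) = card S\<close> cardlt show False by simp
  qed
  then obtain t u where tu: "finite t" "t \<subseteq> Phi ` S" "(\<Sum>v\<in>t. fscale (u v) v) = 0" "\<exists>v\<in>t. u v \<noteq> 0"
    unfolding fvs.dependent_explicit by blast
  define lam where "lam = (\<lambda>l. if Phi l \<in> t then u (Phi l) else 0)"
  have "(\<Sum>l\<in>S. lam l * Phi l x) = 0" for x
  proof -
    have "(\<Sum>l\<in>S. lam l * Phi l x) = (\<Sum>l\<in>{l\<in>S. Phi l \<in> t}. lam l * Phi l x)"
      by (rule sum.mono_neutral_right) (use fS in \<open>auto simp: lam_def\<close>)
    also have "\<dots> = (\<Sum>v\<in>Phi ` {l\<in>S. Phi l \<in> t}. u v * v x)"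
      by (subst sum.reindex) (use True in \<open>auto simp: lam_def intro: inj_on_subset\<close>)
    also have "Phi ` {l\<in>S. Phi l \<in> t} = t" using tu(2) by auto
    also have "(\<Sum>v\<in>t. u v * v x) = (\<Sum>v\<in>t. fscale (u v) v) x"
      by (simp add: sum_fun_apply fscale_apply)
    also have "\<dots> = 0" using tu(3) by simp
    finally show ?thesis .
  qed
  moreover obtain v where "v \<in> t" "u v \<noteq> 0" using tu(4) by blast
  then obtain l where "l \<in> S" "Phi l = v" using tu(2) by blast
  ultimately show ?thesis using \<open>v \<in> t\<close> \<open>u v \<noteq> 0\<close>
    by (auto simp: lam_def intro!: exI[of _ lam])
qed

lemma univ_poly_zero:
  fixes A :: "nat \<Rightarrow> complex"
  assumes "finite J" "\<forall>z. (\<Sum>j\<in>J. A j * z ^ j) = 0" "j \<in> J"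
  shows "A j = 0"
proof -
  define p where "p = (\<Sum>j\<in>J. monom (A j) j)"
  have "\<forall>z. poly p z = 0" using assms(2) by (simp add: p_def poly_sum poly_monom)
  hence "p = 0" using poly_all_0_iff_0 by blast
  hence "coeff p j = 0" by simp
  moreover have "coeff p j = (\<Sum>j'\<in>J. if j' = j then A j' else 0)"
    by (simp add: p_def coeff_sum)
  moreover have "\<dots> = A j" using assms(1,3) by simp
  ultimately show ?thesis by simp
qed

lemma poly_fun_zero:
  fixes S :: "('v \<Rightarrow> nat) set" and lam :: "('v \<Rightarrow> nat) \<Rightarrow> complex"
  assumes "finite X" "finite S"
    and "\<forall>\<alpha>\<in>S. \<forall>\<beta>\<in>S. (\<forall>v\<in>X. \<alpha> v = \<beta> v) \<longrightarrow> \<alpha> = \<beta>"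
    and "\<forall>c::'v\<Rightarrow>complex. (\<Sum>\<alpha>\<in>S. lam \<alpha> * (\<Prod>v\<in>X. c v ^ \<alpha> v)) = 0"
  shows "\<forall>\<alpha>\<in>S. lam \<alpha> = 0"
  using assms
proof (induction X arbitrary: S rule: finite_induct)
  case empty
  show ?case
  proof
    fix \<alpha> assume a: "\<alpha> \<in> S"
    have "S = {\<alpha>}" using empty.prems(2) a by auto
    then show "lam \<alpha> = 0" using empty.prems(3) by simp
  qed
next
  case (insert x X)
  define J where "J = (\<lambda>\<alpha>. \<alpha> x) ` S"
  define Sj where "Sj = (\<lambda>j. {\<alpha>\<in>S. \<alpha> x = j})"
  have fJ: "finite J" using insert.prems(1) by (simp add: J_def)
  have key: "(\<Sum>\<alpha>\<in>Sj j. lam \<alpha> * (\<Prod>v\<in>X. c v ^ \<alpha> v)) = 0" if "j \<in> J" for j c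
  proof -
    have "\<forall>z. (\<Sum>j\<in>J. (\<Sum>\<alpha>\<in>Sj j. lam \<alpha> * (\<Prod>v\<in>X. c v ^ \<alpha> v)) * z ^ j) = 0"
    proof
      fix z
      have "(\<Sum>j\<in>J. (\<Sum>\<alpha>\<in>Sj j. lam \<alpha> * (\<Prod>v\<in>X. c v ^ \<alpha> v)) * z ^ j)
          = (\<Sum>j\<in>J. (\<Sum>\<alpha>\<in>Sj j. lam \<alpha> * (\<Prod>v\<in>insert x X. (c(x:=z)) v ^ \<alpha> v)))"
      proof (rule sum.cong[OF refl])
        fix j assume "j \<in> J"
        have "(\<Sum>\<alpha>\<in>Sj j. lam \<alpha> * (\<Prod>v\<in>X. c v ^ \<alpha> v)) * z ^ j
          = (\<Sum>\<alpha>\<in>Sj j. lam \<alpha> * (\<Prod>v\<in>X. c v ^ \<alpha> v) * z ^ j)" by (simp add: sum_distrib_right)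
        also have "\<dots> = (\<Sum>\<alpha>\<in>Sj j. lam \<alpha> * (\<Prod>v\<in>insert x X. (c(x:=z)) v ^ \<alpha> v))"
        proof (rule sum.cong[OF refl])
          fix \<alpha> assume "\<alpha> \<in> Sj j"
          hence "\<alpha> x = j" by (simp add: Sj_def)
          moreover have "(\<Prod>v\<in>X. (c(x:=z)) v ^ \<alpha> v) = (\<Prod>v\<in>X. c v ^ \<alpha> v)"
            using insert.hyps(2) by (intro prod.cong) auto
          ultimately show "lam \<alpha> * (\<Prod>v\<in>X. c v ^ \<alpha> v) * z ^ j = lam \<alpha> * (\<Prod>v\<in>insert x X. (c(x:=z)) v ^ \<alpha> v)"
            using insert.hyps by (simp add: mult_ac)
        qed
        finally show "(\<Sum>\<alpha>\<in>Sj j. lam \<alpha> * (\<Prod>v\<in>X. c v ^ \<alpha> v)) * z ^ j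
          = (\<Sum>\<alpha>\<in>Sj j. lam \<alpha> * (\<Prod>v\<in>insert x X. (c(x:=z)) v ^ \<alpha> v))" .
      qed
      also have "\<dots> = (\<Sum>\<alpha>\<in>S. lam \<alpha> * (\<Prod>v\<in>insert x X. (c(x:=z)) v ^ \<alpha> v))"
        unfolding Sj_def by (rule sum.group) (use insert.prems(1) fJ in \<open>auto simp: J_def\<close>)
      also have "\<dots> = 0" using insert.prems(3) by blast
      finally show "(\<Sum>j\<in>J. (\<Sum>\<alpha>\<in>Sj j. lam \<alpha> * (\<Prod>v\<in>X. c v ^ \<alpha> v)) * z ^ j) = 0" .
    qed
    from univ_poly_zero[OF fJ this that] show ?thesis .
  qed
  show ?case
  proof
    fix \<alpha> assume a: "\<alpha> \<in> S"
    have j: "\<alpha> x \<in> J" using a by (simp add: J_def)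
    have "\<forall>\<beta>\<in>Sj (\<alpha> x). lam \<beta> = 0"
    proof (rule insert.IH)
      show "finite (Sj (\<alpha> x))" using insert.prems(1) by (simp add: Sj_def)
      show "\<forall>\<alpha>'\<in>Sj (\<alpha> x). \<forall>\<beta>\<in>Sj (\<alpha> x). (\<forall>v\<in>X. \<alpha>' v = \<beta> v) \<longrightarrow> \<alpha>' = \<beta>"
        using insert.prems(2) by (auto simp: Sj_def)
      show "\<forall>c. (\<Sum>\<alpha>'\<in>Sj (\<alpha> x). lam \<alpha>' * (\<Prod>v\<in>X. c v ^ \<alpha>' v)) = 0"
        using key[OF j] by blast
    qed
    then show "lam \<alpha> = 0" using a by (simp add: Sj_def)
  qed
qed



definition Expo :: "'a set \<Rightarrow> nat \<Rightarrow> ('a \<Rightarrow> nat) set" where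
  "Expo X p = {\<alpha>. (\<forall>m. m \<notin> X \<longrightarrow> \<alpha> m = 0) \<and> sum \<alpha> X = p}"

lemma Expo_le: "\<alpha> \<in> Expo X p \<Longrightarrow> finite X \<Longrightarrow> \<alpha> m \<le> p"
  unfolding Expo_def
  by (cases "m \<in> X") (auto intro: member_le_sum[of m X \<alpha>, simplified])

lemma Expo_inj_restrict: "inj_on (\<lambda>\<alpha>. restrict \<alpha> X) (Expo X p)"
proof (rule inj_onI)
  fix \<alpha> \<beta> assume a: "\<alpha> \<in> Expo X p" and b: "\<beta> \<in> Expo X p" and e: "restrict \<alpha> X = restrict \<beta> X"
  show "\<alpha> = \<beta>"
  proof
    fix m show "\<alpha> m = \<beta> m"
    proof (cases "m \<in> X")
      case True then show ?thesis using fun_cong[OF e, of m] by simp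
    next
      case False then show ?thesis using a b by (simp add: Expo_def)
    qed
  qed
qed

lemma finite_Expo: assumes "finite X" shows "finite (Expo X p)"
proof -
  have "(\<lambda>\<alpha>. restrict \<alpha> X) ` Expo X p \<subseteq> PiE X (\<lambda>_. {0..p})"
  proof (rule image_subsetI)
    fix \<alpha> assume "\<alpha> \<in> Expo X p"
    then show "restrict \<alpha> X \<in> PiE X (\<lambda>_. {0..p})"
      by (subst restrict_PiE_iff) (simp add: Expo_le[OF _ assms])
  qed
  moreover have "finite (PiE X (\<lambda>_. {0..p}))" using assms by (simp add: finite_PiE)
  ultimately have "finite ((\<lambda>\<alpha>. restrict \<alpha> X) ` Expo X p)" by (rule finite_subset)
  then show ?thesis by (rule finite_imageD[OF _ Expo_inj_restrict])
qed

lemma card_Expo_le: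
  assumes "finite X" "1 \<le> p"
  shows "card (Expo X p) \<le> (p+1)^(card X - 1)"
proof (cases "X = {}")
  case True
  then have "Expo X p = {}" using assms by (auto simp: Expo_def)
  then show ?thesis by simp
next
  case False
  then obtain x0 where x0: "x0 \<in> X" by blast
  let ?Y = "X - {x0}"
  have inj: "inj_on (\<lambda>\<alpha>. restrict \<alpha> ?Y) (Expo X p)"
  proof (rule inj_onI)
    fix \<alpha> \<beta> assume a: "\<alpha> \<in> Expo X p" and b: "\<beta> \<in> Expo X p"
      and eq: "restrict \<alpha> ?Y = restrict \<beta> ?Y"
    have eqY: "\<forall>m\<in>?Y. \<alpha> m = \<beta> m"
    proof
      fix m assume "m \<in> ?Y" then show "\<alpha> m = \<beta> m" using fun_cong[OF eq, of m] by simp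
    qed
    have sa: "\<alpha> x0 + sum \<alpha> ?Y = p" using a x0 assms(1) by (simp add: Expo_def sum.remove)
    have sb: "\<beta> x0 + sum \<beta> ?Y = p" using b x0 assms(1) by (simp add: Expo_def sum.remove)
    have "sum \<alpha> ?Y = sum \<beta> ?Y" using eqY by (intro sum.cong) auto
    then have "\<alpha> x0 = \<beta> x0" using sa sb by simp
    show "\<alpha> = \<beta>"
    proof
      fix m show "\<alpha> m = \<beta> m"
        using eqY a b \<open>\<alpha> x0 = \<beta> x0\<close> by (cases "m \<in> X"; cases "m = x0") (auto simp: Expo_def)
    qed
  qed
  have "(\<lambda>\<alpha>. restrict \<alpha> ?Y) ` Expo X p \<subseteq> PiE ?Y (\<lambda>_. {0..p})"
  proof (rule image_subsetI)
    fix \<alpha> assume "\<alpha> \<in> Expo X p"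
    then show "restrict \<alpha> ?Y \<in> PiE ?Y (\<lambda>_. {0..p})"
      by (subst restrict_PiE_iff) (simp add: Expo_le[OF _ assms(1)])
  qed
  then have "card ((\<lambda>\<alpha>. restrict \<alpha> ?Y) ` Expo X p) \<le> card (PiE ?Y (\<lambda>_. {0..p}))"
    using assms(1) by (intro card_mono) (auto simp: finite_PiE)
  also have "\<dots> = (p+1)^(card X - 1)" using assms(1) x0 by (simp add: card_PiE)
  finally show ?thesis using card_image[OF inj] by simp
qed

lemma card_Expo_ge:
  assumes "finite X" "x0 \<in> X"
  shows "(c+1)^(card X - 1) \<le> card (Expo X (c * (card X - 1)))"
proof -
  let ?Y = "X - {x0}"
  let ?e = "c * (card X - 1)"
  define F where "F = (\<lambda>\<beta>::'a\<Rightarrow>nat. \<lambda>m. if m \<in> ?Y then \<beta> m else if m = x0 then ?e - sum \<beta> ?Y else 0)"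
  have cY: "card ?Y = card X - 1" using assms by simp
  have sumle: "sum \<beta> ?Y \<le> ?e" if "\<beta> \<in> PiE ?Y (\<lambda>_. {0..c})" for \<beta>
  proof -
    have "sum \<beta> ?Y \<le> sum (\<lambda>_. c) ?Y" using that by (intro sum_mono) (simp add: PiE_iff)
    then show ?thesis using cY by (simp add: mult.commute)
  qed
  have "F ` PiE ?Y (\<lambda>_. {0..c}) \<subseteq> Expo X ?e"
  proof
    fix \<gamma> assume "\<gamma> \<in> F ` PiE ?Y (\<lambda>_. {0..c})"
    then obtain \<beta> where b: "\<beta> \<in> PiE ?Y (\<lambda>_. {0..c})" "\<gamma> = F \<beta>" by blast
    have "sum \<gamma> X = \<gamma> x0 + sum \<gamma> ?Y" using assms by (simp add: sum.remove)
    also have "sum \<gamma> ?Y = sum \<beta> ?Y" using b by (intro sum.cong) (auto simp: F_def)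
    also have "\<gamma> x0 = ?e - sum \<beta> ?Y" using b assms by (simp add: F_def)
    finally have "sum \<gamma> X = ?e" using sumle[OF b(1)] by simp
    moreover have "\<forall>m. m \<notin> X \<longrightarrow> \<gamma> m = 0" using b assms by (simp add: F_def)
    ultimately show "\<gamma> \<in> Expo X ?e" by (simp add: Expo_def)
  qed
  moreover have injF: "inj_on F (PiE ?Y (\<lambda>_. {0..c}))"
  proof (rule inj_onI)
    fix \<beta>1 \<beta>2 assume b1: "\<beta>1 \<in> PiE ?Y (\<lambda>_. {0..c})" and b2: "\<beta>2 \<in> PiE ?Y (\<lambda>_. {0..c})"
      and e: "F \<beta>1 = F \<beta>2"
    have "\<forall>m\<in>?Y. \<beta>1 m = \<beta>2 m"
    proof
      fix m assume "m \<in> ?Y" then show "\<beta>1 m = \<beta>2 m" using fun_cong[OF e, of m] by (simp add: F_def)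
    qed
    then show "\<beta>1 = \<beta>2" using b1 b2 by (intro PiE_ext[OF b1 b2]) auto
  qed
  ultimately have "card (PiE ?Y (\<lambda>_. {0..c})) \<le> card (Expo X ?e)"
    by (intro card_inj_on_le[OF _ _ finite_Expo[OF assms(1)]])
  moreover have "card (PiE ?Y (\<lambda>_. {0..c})) = (c+1)^(card X - 1)"
    using assms by (simp add: card_PiE)
  ultimately show ?thesis by simp
qed

definition dlt :: "'a \<Rightarrow> nat \<Rightarrow> 'a \<Rightarrow> nat" where
  "dlt a x = (\<lambda>j. if j = a then x else 0)"

lemma dlt_Expo: "a \<in> X \<Longrightarrow> finite X \<Longrightarrow> dlt a x \<in> Expo X x"
  by (auto simp: Expo_def dlt_def)

lemma card_Expo_pos: assumes "finite X" "X \<noteq> {}" shows "1 \<le> card (Expo X x)"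
proof -
  obtain a where "a \<in> X" using assms by blast
  then have "dlt a x \<in> Expo X x" using assms by (simp add: dlt_Expo)
  then have "Expo X x \<noteq> {}" by blast
  then show ?thesis using finite_Expo[OF assms(1), of x] by (simp add: Suc_le_eq card_gt_0_iff)
qed

lemma card_Expo_two:
  assumes "(1::nat) \<le> m" "1 \<le> x"
  shows "2 \<le> card (Expo {..m} x)"
proof -
  have "dlt 0 x \<noteq> dlt m x" using assms by (auto simp: dlt_def fun_eq_iff)
  moreover have "{dlt 0 x, dlt m x} \<subseteq> Expo {..m} x" by (auto intro: dlt_Expo)
  moreover have "card {dlt 0 x, dlt m x} = 2" using calculation(1) by simp
  ultimately show ?thesis
    using card_mono[OF finite_Expo[of "{..m}" x], of "{dlt 0 x, dlt m x}"] by simp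
qed

lemma card_Expo_add:
  assumes "(1::nat) \<le> m"
  shows "card (Expo {..m} x) + card (Expo {..m} y) \<le> card (Expo {..m} (x+y)) + 1"
proof -
  let ?A = "(\<lambda>f. f + dlt 0 y) ` Expo {..m} x"
  let ?B = "(\<lambda>g. g + dlt m x) ` Expo {..m} y"
  have cA: "card ?A = card (Expo {..m} x)"
    by (rule card_image) (auto simp: inj_on_def fun_eq_iff)
  have cB: "card ?B = card (Expo {..m} y)"
    by (rule card_image) (auto simp: inj_on_def fun_eq_iff)
  have sub: "?A \<union> ?B \<subseteq> Expo {..m} (x+y)"
    by (auto simp: Expo_def dlt_def sum.distrib)
  have int: "?A \<inter> ?B \<subseteq> {dlt m x + dlt 0 y}"
  proof
    fix h assume "h \<in> ?A \<inter> ?B"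
    then obtain f g where f: "f \<in> Expo {..m} x" and g: "g \<in> Expo {..m} y"
      and hf: "h = f + dlt 0 y" and hg: "h = g + dlt m x" by blast
    have "h m = f m" using hf assms by (simp add: dlt_def)
    moreover have "h m = g m + x" using hg by (simp add: dlt_def)
    ultimately have "f m = g m + x" by simp
    hence fm: "f m \<ge> x" by simp
    have sf: "sum f {..m} = x" using f by (simp add: Expo_def)
    have fz: "f j = 0" if "j \<noteq> m" for j
    proof (cases "j \<le> m")
      case True
      have "f j + f m \<le> sum f {..m}"
        using True that by (subst sum.remove[of _ m]) (auto intro!: member_le_sum)
      then show ?thesis using fm sf by simp
    next
      case False then show ?thesis using f by (simp add: Expo_def)
    qed
    have "sum f {..m} = f m + sum f ({..m} - {m})" by (simp add: sum.remove)
    also have "sum f ({..m} - {m}) = 0" using fz by (intro sum.neutral) auto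
    finally have "f m = x" using sf by simp
    hence "f = dlt m x" using fz by (auto simp: dlt_def fun_eq_iff)
    then show "h \<in> {dlt m x + dlt 0 y}" using hf by simp
  qed
  have "card (?A \<inter> ?B) \<le> 1" using card_mono[OF _ int] by simp
  moreover have "card (?A \<union> ?B) \<le> card (Expo {..m} (x+y))"
    using card_mono[OF finite_Expo sub] by simp
  moreover have "card ?A + card ?B = card (?A \<union> ?B) + card (?A \<inter> ?B)"
    using finite_Expo[of "{..m}"] by (intro card_Un_Int) auto
  ultimately show ?thesis using cA cB by linarith
qed

lemma prod_ineq:
  fixes u v w :: "'i \<Rightarrow> nat"
  assumes "finite I" "i \<in> I" "j \<in> I" "i \<noteq> j"
    and bnd: "\<forall>l\<in>I. 1 \<le> u l \<and> 1 \<le> v l \<and> u l \<le> w l \<and> v l \<le> w l \<and> u l + v l \<le> w l + 1"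
    and "2 \<le> u i" "2 \<le> v j"
  shows "prod u I + prod v I \<le> prod w I"
proof -
  let ?R = "I - {i} - {j}"
  have split: "prod f I = f i * f j * prod f ?R" for f :: "'i \<Rightarrow> nat"
    using assms(1-4) by (simp add: prod.remove mult.assoc)
  have Ru: "prod u ?R \<le> prod w ?R" using bnd by (intro prod_mono) auto
  have Rv: "prod v ?R \<le> prod w ?R" using bnd by (intro prod_mono) auto
  have wij: "u i * u j + v i * v j \<le> w i * w j"
  proof -
    have b: "1 \<le> u i" "1 \<le> v i" "1 \<le> u j" "1 \<le> v j" "u i + v i \<le> w i + 1" "u j + v j \<le> w j + 1"
      using bnd assms(2,3) by auto
    define a1 where "a1 = u i - 1" define b1 where "b1 = v i - 1"
    define a2 where "a2 = u j - 1" define b2 where "b2 = v j - 1"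
    have "w i \<ge> a1 + b1 + 1" "w j \<ge> a2 + b2 + 1" using b by (auto simp: a1_def b1_def a2_def b2_def)
    hence "(a1+b1+1)*(a2+b2+1) \<le> w i * w j" by (intro mult_mono) auto
    moreover have "a1 \<ge> 1" "b2 \<ge> 1" using assms(6,7) by (auto simp: a1_def b2_def)
    moreover have "u i * u j + v i * v j = (a1+1)*(a2+1) + (b1+1)*(b2+1)"
      using b by (simp add: a1_def b1_def a2_def b2_def)
    moreover have "a1 * b2 \<ge> 1" using \<open>a1 \<ge> 1\<close> \<open>b2 \<ge> 1\<close> by (simp add: Suc_le_eq)
    moreover have "(a1+1)*(a2+1) + (b1+1)*(b2+1) + a1*b2 + a2*b1 = (a1+b1+1)*(a2+b2+1) + 1"
      by (simp add: algebra_simps)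
    ultimately show ?thesis by linarith
  qed
  have "prod u I + prod v I = u i * u j * prod u ?R + v i * v j * prod v ?R" by (simp add: split)
  also have "\<dots> \<le> u i * u j * prod w ?R + v i * v j * prod w ?R"
    using Ru Rv by (intro add_mono mult_left_mono) auto
  also have "\<dots> = (u i * u j + v i * v j) * prod w ?R" by (simp add: algebra_simps)
  also have "\<dots> \<le> w i * w j * prod w ?R" using wij by (intro mult_right_mono) auto
  also have "\<dots> = prod w I" by (simp add: split)
  finally show ?thesis .
qed



definition MS :: "(nat \<Rightarrow> nat) \<Rightarrow> nat \<Rightarrow> (nat \<Rightarrow> int) \<Rightarrow> mono set" where
  "MS n k a = {m. mono_in n k m \<and> (\<forall>i<k. int (block_deg n m i) = a i)}"

lemma sections_MS: "p \<in> sections n k a \<longleftrightarrow> Poly_Mapping.keys p \<subseteq> MS n k a"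
  by (auto simp: sections_def MS_def)

lemma lookup_outside:
  assumes "mono_in n k m" "\<not> (i < k \<and> j \<le> n i)"
  shows "Poly_Mapping.lookup m (i, j) = 0"
  using assms by (auto simp: mono_in_def in_keys_iff)

lemma card_MS:
  assumes "\<forall>i<k. 0 \<le> a i"
  shows "finite (MS n k a) \<and> card (MS n k a) = (\<Prod>i<k. card (Expo {..n i} (nat (a i))))"
proof -
  let ?P = "PiE {..<k} (\<lambda>i. Expo {..n i} (nat (a i)))"
  define sl where "sl = (\<lambda>m::mono. \<lambda>i\<in>{..<k}. \<lambda>j. Poly_Mapping.lookup m (i,j))"
  have into: "sl m \<in> ?P" if m: "m \<in> MS n k a" for m
    unfolding sl_def
  proof (subst restrict_PiE_iff, intro ballI)
    fix i assume i: "i \<in> {..<k}"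
    have mi: "mono_in n k m" and bd: "int (block_deg n m i) = a i" using m i by (auto simp: MS_def)
    have "\<forall>j. j \<notin> {..n i} \<longrightarrow> Poly_Mapping.lookup m (i, j) = 0"
      using lookup_outside[OF mi] by auto
    moreover have "block_deg n m i = nat (a i)"
      using bd by (metis nat_int)
    then have "(\<Sum>j\<le>n i. Poly_Mapping.lookup m (i, j)) = nat (a i)"
      by (simp add: block_deg_def)
    ultimately show "(\<lambda>j. Poly_Mapping.lookup m (i, j)) \<in> Expo {..n i} (nat (a i))"
      by (simp add: Expo_def)
  qed
  have inj: "inj_on sl (MS n k a)"
  proof (rule inj_onI)
    fix m1 m2 assume m1: "m1 \<in> MS n k a" and m2: "m2 \<in> MS n k a" and e: "sl m1 = sl m2"
    show "m1 = m2"
    proof (rule poly_mapping_eqI)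
      fix x :: "nat \<times> nat"
      obtain i j where x: "x = (i, j)" by (cases x)
      show "Poly_Mapping.lookup m1 x = Poly_Mapping.lookup m2 x"
      proof (cases "i < k \<and> j \<le> n i")
        case True
        then have "sl m1 i j = sl m2 i j" using e by simp
        then show ?thesis using True x by (simp add: sl_def)
      next
        case False
        then show ?thesis using m1 m2 x lookup_outside[of n k _ i j] by (simp add: MS_def)
      qed
    qed
  qed
  have onto: "?P \<subseteq> sl ` MS n k a"
  proof
    fix F assume F: "F \<in> ?P"
    define f where "f = (\<lambda>(i,j). if i < k then F i j else (0::nat))"
    have Fz: "F i j = 0" if "i < k" "\<not> j \<le> n i" for i j
      using F that by (auto simp: PiE_iff Expo_def)
    have fsupp: "{x. f x \<noteq> 0} \<subseteq> Sigma {..<k} (\<lambda>i. {..n i})"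
      using Fz by (auto simp: f_def split: if_splits) (metis less_irrefl)
    have fin: "finite {x. f x \<noteq> 0}"
      by (rule finite_subset[OF fsupp]) auto
    define m where "m = Abs_poly_mapping f"
    have lm: "Poly_Mapping.lookup m = f" using fin by (simp add: m_def)
    have mi: "mono_in n k m"
      unfolding mono_in_def using fsupp by (auto simp: in_keys_iff lm)
    have bd: "int (block_deg n m i) = a i" if "i < k" for i
    proof -
      have "F i \<in> Expo {..n i} (nat (a i))" using F that by (auto simp: PiE_iff)
      then have "(\<Sum>j\<le>n i. F i j) = nat (a i)" by (simp add: Expo_def)
      then show ?thesis using that assms by (simp add: block_deg_def lm f_def)
    qed
    have mMS: "m \<in> MS n k a" using mi bd by (simp add: MS_def)
    have "sl m = F"
    proof (rule PiE_ext[OF into[OF mMS] F])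
      fix i assume "i \<in> {..<k}"
      then show "sl m i = F i" by (auto simp: sl_def lm f_def)
    qed
    then show "F \<in> sl ` MS n k a" using mMS by blast
  qed
  have bij: "bij_betw sl (MS n k a) ?P"
    unfolding bij_betw_def using inj onto into by auto
  have finP: "finite ?P" by (intro finite_PiE) (auto intro: finite_Expo)
  show ?thesis
    using bij_betw_finite[OF bij] bij_betw_same_card[OF bij] finP by (simp add: card_PiE)
qed

lemma lookup_mult_fin:
  fixes g h :: cpoly
  assumes "finite A" "finite B" "Poly_Mapping.keys g \<subseteq> A" "Poly_Mapping.keys h \<subseteq> B"
  shows "Poly_Mapping.lookup (g * h) v =
    (\<Sum>m1\<in>A. \<Sum>m2\<in>B. if m1 + m2 = v then Poly_Mapping.lookup g m1 * Poly_Mapping.lookup h m2 else 0)"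
proof -
  have inner: "(\<Sum>q. Poly_Mapping.lookup h q when v = l + q)
      = (\<Sum>m2\<in>B. if l + m2 = v then Poly_Mapping.lookup h m2 else 0)" for l
  proof -
    have "(\<Sum>q. Poly_Mapping.lookup h q when v = l + q) = (\<Sum>q\<in>B. Poly_Mapping.lookup h q when v = l + q)"
      by (rule Sum_any.expand_superset) (use assms in \<open>auto simp: in_keys_iff\<close>)
    then show ?thesis by (auto simp: when_def intro!: sum.cong)
  qed
  have "Poly_Mapping.lookup (g * h) v
      = (\<Sum>l. Poly_Mapping.lookup g l * (\<Sum>m2\<in>B. if l + m2 = v then Poly_Mapping.lookup h m2 else 0))"
    by (simp add: lookup_mult inner)
  also have "\<dots> = (\<Sum>l\<in>A. Poly_Mapping.lookup g l * (\<Sum>m2\<in>B. if l + m2 = v then Poly_Mapping.lookup h m2 else 0))"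
    by (rule Sum_any.expand_superset) (use assms in \<open>auto simp: in_keys_iff\<close>)
  finally show ?thesis by (simp add: sum_distrib_left if_distrib cong: if_cong)
qed



locale P51 =
  fixes k :: nat and n :: "nat \<Rightarrow> nat" and d :: "nat \<Rightarrow> int"
  assumes k2: "k \<ge> 2" and n1: "\<forall>i<k. n i \<ge> 1" and n0: "n 0 = 1" and d1: "\<forall>i<k. d i \<ge> 1"
begin

definition Ty :: "(nat \<Rightarrow> int) set" where
  "Ty = {a. (\<forall>i<k. 0 \<le> a i \<and> a i \<le> d i) \<and> (\<forall>i. k \<le> i \<longrightarrow> a i = 0)
          \<and> nontrivial_deg k a \<and> nontrivial_deg k (\<lambda>i. d i - a i)}"

abbreviation "Md \<equiv> MS n k d"
abbreviation "Ma a \<equiv> MS n k a"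
abbreviation "Mb a \<equiv> MS n k (\<lambda>i. d i - a i)"

lemma d_nonneg: "\<forall>i<k. 0 \<le> d i" using d1 by force

lemma Md_card: "finite Md" "card Md = (\<Prod>i<k. card (Expo {..n i} (nat (d i))))"
  using card_MS[of k d n] d_nonneg by auto

definition e0 :: "nat \<Rightarrow> int" where "e0 = (\<lambda>i. if i = 0 then 1 else 0)"

lemma e0_Ty: "e0 \<in> Ty"
proof -
  have "nontrivial_deg k e0" using k2 by (auto simp: nontrivial_deg_def e0_def intro!: exI[of _ 0])
  moreover have "nontrivial_deg k (\<lambda>i. d i - e0 i)"
    using k2 d1[rule_format, of 1] by (auto simp: nontrivial_deg_def e0_def intro!: exI[of _ 1])
  moreover have "\<forall>i<k. 0 \<le> e0 i \<and> e0 i \<le> d i" using d1 by (auto simp: e0_def)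
  moreover have "\<forall>i. k \<le> i \<longrightarrow> e0 i = 0" using k2 by (auto simp: e0_def)
  ultimately show ?thesis by (simp add: Ty_def)
qed

lemma finite_Ty: "finite Ty"
proof -
  have inj: "inj_on (\<lambda>a. restrict a {..<k}) Ty"
  proof (rule inj_onI)
    fix a b assume a: "a \<in> Ty" and b: "b \<in> Ty" and e: "restrict a {..<k} = restrict b {..<k}"
    show "a = b"
    proof
      fix i show "a i = b i"
      proof (cases "i < k")
        case True then show ?thesis using fun_cong[OF e, of i] by simp
      next
        case False then show ?thesis using a b by (simp add: Ty_def)
      qed
    qed
  qed
  have "(\<lambda>a. restrict a {..<k}) ` Ty \<subseteq> PiE {..<k} (\<lambda>i. {0..d i})"
  proof (rule image_subsetI)
    fix a assume "a \<in> Ty"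
    then show "restrict a {..<k} \<in> PiE {..<k} (\<lambda>i. {0..d i})"
      by (subst restrict_PiE_iff) (simp add: Ty_def)
  qed
  moreover have "finite (PiE {..<k} (\<lambda>i. {0..d i}))" by (intro finite_PiE) auto
  ultimately have "finite ((\<lambda>a. restrict a {..<k}) ` Ty)" by (rule finite_subset)
  then show ?thesis by (rule finite_imageD[OF _ inj])
qed

lemma finite_Md: "finite Md" using Md_card by auto

lemma MS_Ty: assumes "a \<in> Ty" shows "finite (Ma a)" "finite (Mb a)"
  using card_MS[of k a n] card_MS[of k "\<lambda>i. d i - a i" n] assms by (auto simp: Ty_def)

lemma card_add: assumes "a \<in> Ty" shows "card (Ma a) + card (Mb a) \<le> card Md"
proof -
  define u where "u = (\<lambda>i. card (Expo {..n i} (nat (a i))))"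
  define v where "v = (\<lambda>i. card (Expo {..n i} (nat (d i - a i))))"
  define w where "w = (\<lambda>i. card (Expo {..n i} (nat (d i))))"
  have a: "\<forall>i<k. 0 \<le> a i \<and> a i \<le> d i" "nontrivial_deg k a" "nontrivial_deg k (\<lambda>i. d i - a i)"
    using assms by (auto simp: Ty_def)
  have cMa: "card (Ma a) = prod u {..<k}" using card_MS[of k a n] a by (simp add: u_def)
  have cMb: "card (Mb a) = prod v {..<k}" using card_MS[of k "\<lambda>i. d i - a i" n] a by (simp add: v_def)
  have cMd: "card Md = prod w {..<k}" using Md_card by (simp add: w_def)
  have bnd: "\<forall>l\<in>{..<k}. 1 \<le> u l \<and> 1 \<le> v l \<and> u l \<le> w l \<and> v l \<le> w l \<and> u l + v l \<le> w l + 1"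
  proof
    fix l assume l: "l \<in> {..<k}"
    have nl: "1 \<le> n l" using n1 l by auto
    have dd: "nat (d l) = nat (a l) + nat (d l - a l)" using a(1) l by auto
    have "u l + v l \<le> w l + 1" unfolding u_def v_def w_def dd by (rule card_Expo_add[OF nl])
    moreover have "1 \<le> u l" "1 \<le> v l" unfolding u_def v_def by (rule card_Expo_pos; simp)+
    ultimately show "1 \<le> u l \<and> 1 \<le> v l \<and> u l \<le> w l \<and> v l \<le> w l \<and> u l + v l \<le> w l + 1" by linarith
  qed
  have two_u: "2 \<le> u i" if "i < k" "a i \<noteq> 0" for i
    unfolding u_def using n1 that a(1) by (intro card_Expo_two) auto
  have two_v: "2 \<le> v i" if "i < k" "d i - a i \<noteq> 0" for i
    unfolding v_def using n1 that a(1) by (intro card_Expo_two) auto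
  obtain i where i: "i < k" "a i \<noteq> 0" using a(2) by (auto simp: nontrivial_deg_def)
  obtain j where j: "j < k" "d j - a j \<noteq> 0" using a(3) by (auto simp: nontrivial_deg_def)
  have "prod u {..<k} + prod v {..<k} \<le> prod w {..<k}"
  proof (cases "i = j")
    case False
    then show ?thesis using prod_ineq[OF _ _ _ False bnd] i j two_u two_v by auto
  next
    case True
    obtain l where l: "l < k" "l \<noteq> i"
      using k2 by (metis One_nat_def Suc_1 Suc_le_lessD less_one n_not_Suc_n not_less_eq zero_less_Suc)
    show ?thesis
    proof (cases "a l = 0")
      case True
      then have "d l - a l \<noteq> 0" using d1 l by auto
      then show ?thesis using prod_ineq[OF _ _ _ _ bnd, of i l] i l two_u two_v by auto
    next
      case False
      then show ?thesis using prod_ineq[OF _ _ _ _ bnd, of l j] \<open>i = j\<close> j l two_u two_v by auto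
    qed
  qed
  then show ?thesis using cMa cMb cMd by simp
qed

lemma card_Md_ge2: "2 \<le> card Md"
proof -
  define w where "w = (\<lambda>i. card (Expo {..n i} (nat (d i))))"
  have cMd: "card Md = prod w {..<k}" using Md_card by (simp add: w_def)
  have "prod w {..<k} = w 0 * prod w ({..<k} - {0})" using k2 by (simp add: prod.remove)
  moreover have "2 \<le> w 0" unfolding w_def using n0 d1[rule_format, of 0] k2 by (intro card_Expo_two) auto
  moreover have "1 \<le> prod w ({..<k} - {0})"
    unfolding w_def by (intro prod_ge_1) (rule card_Expo_pos; simp)
  ultimately show ?thesis using cMd
    by (metis dual_order.trans mult.right_neutral mult_le_mono2)
qed

end


lemma poly_mapping_monomials:
  fixes u :: "'a \<Rightarrow>\<^sub>0 'b::comm_monoid_add"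
  shows "u = (\<Sum>m\<in>Poly_Mapping.keys u. Poly_Mapping.single m (Poly_Mapping.lookup u m))"
proof (rule poly_mapping_eqI)
  fix x
  have "Poly_Mapping.lookup (\<Sum>m\<in>Poly_Mapping.keys u. Poly_Mapping.single m (Poly_Mapping.lookup u m)) x
      = (\<Sum>m\<in>Poly_Mapping.keys u. if m = x then Poly_Mapping.lookup u m else 0)"
    by (simp add: lookup_sum lookup_single when_def)
  also have "\<dots> = Poly_Mapping.lookup u x" by (simp add: in_keys_iff)
  finally show "Poly_Mapping.lookup u x = Poly_Mapping.lookup (\<Sum>m\<in>Poly_Mapping.keys u. Poly_Mapping.single m (Poly_Mapping.lookup u m)) x" by simp
qed

lemma keys_sum_single_sub:
  assumes "\<And>m. m \<in> A \<Longrightarrow> f m \<in> B"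
  shows "Poly_Mapping.keys (\<Sum>m\<in>A. Poly_Mapping.single (f m) (c m)) \<subseteq> B"
  using keys_sum[of "\<lambda>m. Poly_Mapping.single (f m) (c m)" A] assms
  by (auto split: if_splits)

context P51
begin

lemma part1:
  assumes u: "u \<in> sections n k d"
  shows "strength_decomp n k d u 2"
proof -
  define s0 :: mono where "s0 = Poly_Mapping.single (0,0) 1"
  define t0 :: mono where "t0 = Poly_Mapping.single (0,1) 1"
  define xs :: cpoly where "xs = Poly_Mapping.single s0 1"
  define xt :: cpoly where "xt = Poly_Mapping.single t0 1"
  define K1 where "K1 = {m\<in>Poly_Mapping.keys u. 0 < Poly_Mapping.lookup m (0,0)}"
  define K2 where "K2 = {m\<in>Poly_Mapping.keys u. Poly_Mapping.lookup m (0,0) = 0}"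
  define A where "A = (\<Sum>m\<in>K1. Poly_Mapping.single (m - s0) (Poly_Mapping.lookup u m))"
  define B where "B = (\<Sum>m\<in>K2. Poly_Mapping.single (m - t0) (Poly_Mapping.lookup u m))"
  have uMS: "Poly_Mapping.keys u \<subseteq> Md" using u by (simp add: sections_MS)
  have k0: "0 < k" "1 < k" using k2 by auto
  have add_s0: "s0 + (m - s0) = m" if "m \<in> K1" for m
  proof (rule poly_mapping_eqI)
    fix x show "Poly_Mapping.lookup (s0 + (m - s0)) x = Poly_Mapping.lookup m x"
      using that by (auto simp: s0_def K1_def lookup_add lookup_minus lookup_single when_def)
  qed
  have t_pos: "0 < Poly_Mapping.lookup m (0,1)" if "m \<in> K2" for m
  proof -
    have "m \<in> Md" using that uMS by (auto simp: K2_def)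
    then have "int (block_deg n m 0) = d 0" using k0 by (simp add: MS_def)
    moreover have "block_deg n m 0 = Poly_Mapping.lookup m (0,0) + Poly_Mapping.lookup m (0,1)"
      using n0 by (simp add: block_deg_def)
    ultimately show ?thesis using that d1 k0 by (auto simp: K2_def)
  qed
  have add_t0: "t0 + (m - t0) = m" if "m \<in> K2" for m
  proof (rule poly_mapping_eqI)
    fix x show "Poly_Mapping.lookup (t0 + (m - t0)) x = Poly_Mapping.lookup m x"
      using t_pos[OF that] by (auto simp: t0_def lookup_add lookup_minus lookup_single when_def)
  qed
  have sA: "xs * A = (\<Sum>m\<in>K1. Poly_Mapping.single m (Poly_Mapping.lookup u m))"
    unfolding A_def xs_def by (simp add: sum_distrib_left mult_single add_s0)
  have tB: "xt * B = (\<Sum>m\<in>K2. Poly_Mapping.single m (Poly_Mapping.lookup u m))"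
    unfolding B_def xt_def by (simp add: sum_distrib_left mult_single add_t0)
  have usum: "xs * A + xt * B = u"
  proof -
    have "K1 \<union> K2 = Poly_Mapping.keys u" "K1 \<inter> K2 = {}" by (auto simp: K1_def K2_def)
    moreover have "finite K1" "finite K2" by (auto simp: K1_def K2_def)
    ultimately have "(\<Sum>m\<in>K1. Poly_Mapping.single m (Poly_Mapping.lookup u m)) + (\<Sum>m\<in>K2. Poly_Mapping.single m (Poly_Mapping.lookup u m))
        = (\<Sum>m\<in>Poly_Mapping.keys u. Poly_Mapping.single m (Poly_Mapping.lookup u m))"
      using sum.union_disjoint[of K1 K2 "\<lambda>m. Poly_Mapping.single m (Poly_Mapping.lookup u m)"] by simp
    then show ?thesis using sA tB poly_mapping_monomials[of u] by simp
  qed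
  let ?b = "\<lambda>i. d i - e0 i"
  have blk_minus: "block_deg n (m - p) i = block_deg n m i - block_deg n p i"
    if "\<forall>x. Poly_Mapping.lookup p x \<le> Poly_Mapping.lookup m x" for m p :: mono and i
  proof -
    have "block_deg n (m - p) i = (\<Sum>j\<le>n i. Poly_Mapping.lookup m (i,j) - Poly_Mapping.lookup p (i,j))"
      by (simp add: block_deg_def lookup_minus)
    also have "\<dots> = block_deg n m i - block_deg n p i"
      unfolding block_deg_def using that by (simp add: sum_subtractf_nat)
    finally show ?thesis .
  qed
  have mono_minus: "mono_in n k (m - p)" if "mono_in n k m" for m p :: mono
  proof -
    have "Poly_Mapping.keys (m - p) \<subseteq> Poly_Mapping.keys m" by (auto simp: in_keys_iff lookup_minus)
    then show ?thesis using that unfolding mono_in_def by blast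
  qed
  have A_sec: "A \<in> sections n k ?b"
    unfolding sections_MS A_def
  proof (rule keys_sum_single_sub)
    fix m assume m: "m \<in> K1"
    have mMd: "m \<in> Md" using m uMS by (auto simp: K1_def)
    have le: "\<forall>x. Poly_Mapping.lookup s0 x \<le> Poly_Mapping.lookup m x"
      using m by (auto simp: s0_def K1_def lookup_single when_def)
    have bs0: "block_deg n s0 i = (if i = 0 then 1 else 0)" for i
      by (simp add: block_deg_def s0_def lookup_single when_def)
    have b1: "Poly_Mapping.lookup m (0,0) \<le> block_deg n m 0"
      unfolding block_deg_def by (rule member_le_sum[of 0 "{..n 0}" "\<lambda>j. Poly_Mapping.lookup m (0,j)", simplified])
    then have b1': "1 \<le> block_deg n m 0" using m by (auto simp: K1_def)
    show "m - s0 \<in> MS n k ?b"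
      using mMd b1' by (auto simp: MS_def mono_minus blk_minus[OF le] bs0 e0_def of_nat_diff)
  qed
  have B_sec: "B \<in> sections n k ?b"
    unfolding sections_MS B_def
  proof (rule keys_sum_single_sub)
    fix m assume m: "m \<in> K2"
    have mMd: "m \<in> Md" using m uMS by (auto simp: K2_def)
    have le: "\<forall>x. Poly_Mapping.lookup t0 x \<le> Poly_Mapping.lookup m x"
      using t_pos[OF m] by (auto simp: t0_def lookup_single when_def)
    have bt0: "block_deg n t0 i = (if i = 0 then 1 else 0)" for i
      using n0 by (simp add: block_deg_def t0_def lookup_single when_def)
    have b1: "Poly_Mapping.lookup m (0,1) \<le> block_deg n m 0"
      unfolding block_deg_def using n0 member_le_sum[of 1 "{..n 0}" "\<lambda>j. Poly_Mapping.lookup m (0,j)"] by simp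
    then have b1': "1 \<le> block_deg n m 0" using t_pos[OF m] by linarith
    show "m - t0 \<in> MS n k ?b"
      using mMd b1' by (auto simp: MS_def mono_minus blk_minus[OF le] bt0 e0_def)
  qed
  have xs_sec: "xs \<in> sections n k e0"
    unfolding sections_MS xs_def
    using k0 n0 by (auto simp: MS_def mono_in_def s0_def block_deg_def lookup_single when_def e0_def)
  have xt_sec: "xt \<in> sections n k e0"
    unfolding sections_MS xt_def
    using k0 n0 by (auto simp: MS_def mono_in_def t0_def block_deg_def lookup_single when_def e0_def)
  have nt: "nontrivial_deg k e0" "nontrivial_deg k ?b"
    using e0_Ty by (auto simp: Ty_def)
  show ?thesis
    unfolding strength_decomp_def
    apply (rule exI[of _ "\<lambda>_. e0"])
    apply (rule exI[of _ "\<lambda>t. if t = 0 then xs else xt"])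
    apply (rule exI[of _ "\<lambda>t. if t = 0 then A else B"])
    using nt xs_sec xt_sec A_sec B_sec usum
    by (auto simp: numeral_2_eq_2 less_Suc_eq)
qed

end


type_synonym dom = "(nat \<Rightarrow> int) \<times> (mono \<Rightarrow> complex) \<times> (mono \<Rightarrow> complex)"

lemma prod_pow_add: "(\<Prod>m\<in>A. (G m::complex) ^ \<alpha> m) * (\<Prod>m\<in>A. G m ^ \<beta> m) = (\<Prod>m\<in>A. G m ^ (\<alpha> + \<beta>) m)"
  by (simp add: prod.distrib[symmetric] power_add)

lemma Expo_add: "\<alpha> \<in> Expo X p \<Longrightarrow> \<beta> \<in> Expo X q \<Longrightarrow> \<alpha> + \<beta> \<in> Expo X (p + q)"
  by (simp add: Expo_def sum.distrib)

lemma prod_dlt: "m1 \<in> A \<Longrightarrow> finite A \<Longrightarrow> (\<Prod>m\<in>A. (G m::complex) ^ dlt m1 1 m) = G m1"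
proof -
  assume "m1 \<in> A" "finite A"
  have "(\<Prod>m\<in>A. G m ^ dlt m1 1 m) = (\<Prod>m\<in>A. if m = m1 then G m else 1)"
    by (intro prod.cong) (auto simp: dlt_def)
  also have "\<dots> = G m1" using \<open>m1 \<in> A\<close> \<open>finite A\<close> by (simp add: prod.delta')
  finally show ?thesis .
qed

lemma if_fun_apply: "(if P then f else (0::'x \<Rightarrow> complex)) x = (if P then f x else 0)"
  by simp

lemma prod_dlt': "m1 \<in> A \<Longrightarrow> finite A \<Longrightarrow> (\<Prod>m\<in>A. (G m::complex) ^ dlt m1 (Suc 0) m) = G m1"
  using prod_dlt by simp

context P51
begin

definition tauT :: "(nat \<Rightarrow> int) \<Rightarrow> (mono \<Rightarrow> nat) \<Rightarrow> (mono \<Rightarrow> nat) \<Rightarrow> dom \<Rightarrow> complex" where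
  "tauT a \<alpha> \<beta> = (\<lambda>(a',G,H). if a' = a then (\<Prod>m\<in>Ma a. G m ^ \<alpha> m) * (\<Prod>m\<in>Mb a. H m ^ \<beta> m) else 0)"

definition Gen :: "nat \<Rightarrow> nat \<Rightarrow> (dom \<Rightarrow> complex) set" where
  "Gen p q = (\<lambda>(a,\<alpha>,\<beta>). tauT a \<alpha> \<beta>) ` (SIGMA a:Ty. Expo (Ma a) p \<times> Expo (Mb a) q)"

definition psi :: "(nat \<Rightarrow> int) \<Rightarrow> mono \<Rightarrow> (mono \<Rightarrow> complex) \<Rightarrow> (mono \<Rightarrow> complex) \<Rightarrow> complex" where
  "psi a v G H = (\<Sum>m1\<in>Ma a. \<Sum>m2\<in>Mb a. if m1 + m2 = v then G m1 * H m2 else 0)"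

definition psiT :: "mono \<Rightarrow> dom \<Rightarrow> complex" where
  "psiT v = (\<lambda>(a',G,H). if a' \<in> Ty then psi a' v G H else 0)"

definition unitT :: "dom \<Rightarrow> complex" where
  "unitT = (\<lambda>(a',G,H). if a' \<in> Ty then 1 else 0)"

definition PhiT :: "(mono \<Rightarrow> nat) \<Rightarrow> dom \<Rightarrow> complex" where
  "PhiT \<alpha> = (\<lambda>x. unitT x * (\<Prod>v\<in>Md. psiT v x ^ \<alpha> v))"

lemma Gen_mult:
  assumes "f \<in> Gen p q" "g \<in> Gen p' q'"
  shows "(\<lambda>x. f x * g x) \<in> fvs.span (Gen (p+p') (q+q'))"
proof -
  obtain a1 \<alpha>1 \<beta>1 where f: "a1 \<in> Ty" "\<alpha>1 \<in> Expo (Ma a1) p" "\<beta>1 \<in> Expo (Mb a1) q" "f = tauT a1 \<alpha>1 \<beta>1"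
    using assms(1) by (auto simp: Gen_def)
  obtain a2 \<alpha>2 \<beta>2 where g: "a2 \<in> Ty" "\<alpha>2 \<in> Expo (Ma a2) p'" "\<beta>2 \<in> Expo (Mb a2) q'" "g = tauT a2 \<alpha>2 \<beta>2"
    using assms(2) by (auto simp: Gen_def)
  show ?thesis
  proof (cases "a1 = a2")
    case True
    have "(\<lambda>x. f x * g x) = tauT a1 (\<alpha>1 + \<alpha>2) (\<beta>1 + \<beta>2)"
    proof
      fix x :: dom
      obtain a' G H where x: "x = (a', G, H)" by (cases x) auto
      show "f x * g x = tauT a1 (\<alpha>1 + \<alpha>2) (\<beta>1 + \<beta>2) x"
        using True by (simp add: f(4) g(4) x tauT_def power_add prod.distrib mult_ac)
    qed
    moreover have "tauT a1 (\<alpha>1 + \<alpha>2) (\<beta>1 + \<beta>2) \<in> Gen (p+p') (q+q')"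
      unfolding Gen_def using f g True
      by (intro image_eqI[of _ _ "(a1, \<alpha>1 + \<alpha>2, \<beta>1 + \<beta>2)"]) (auto intro: Expo_add)
    ultimately show ?thesis by (simp add: fvs.span_base)
  next
    case False
    have "(\<lambda>x. f x * g x) = 0"
    proof
      fix x :: dom
      obtain a' G H where x: "x = (a', G, H)" by (cases x) auto
      show "f x * g x = 0 x" using False by (simp add: f(4) g(4) x tauT_def)
    qed
    then show ?thesis by (simp add: fvs.span_zero)
  qed
qed

lemma span_mult:
  assumes "f \<in> fvs.span (Gen p q)" "g \<in> fvs.span (Gen p' q')"
  shows "(\<lambda>x. f x * g x) \<in> fvs.span (Gen (p+p') (q+q'))"
proof -
  obtain t r where t: "finite t" "t \<subseteq> Gen p q" "f = (\<Sum>a\<in>t. fscale (r a) a)"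
    using assms(1) unfolding fvs.span_explicit by blast
  obtain t' r' where t': "finite t'" "t' \<subseteq> Gen p' q'" "g = (\<Sum>a\<in>t'. fscale (r' a) a)"
    using assms(2) unfolding fvs.span_explicit by blast
  have eq: "(\<lambda>x. f x * g x) = (\<Sum>a\<in>t. \<Sum>b\<in>t'. fscale (r a * r' b) (\<lambda>x. a x * b x))"
  proof
    fix x
    show "f x * g x = (\<Sum>a\<in>t. \<Sum>b\<in>t'. fscale (r a * r' b) (\<lambda>x. a x * b x)) x"
      by (simp add: t(3) t'(3) sum_fun_apply fscale_apply sum_distrib_left sum_distrib_right mult_ac)
  qed
  show ?thesis unfolding eq
    by (intro fvs.span_sum fvs.span_scale Gen_mult) (use t t' in auto)
qed

lemma unitT_span: "unitT \<in> fvs.span (Gen 0 0)"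
proof -
  have "unitT = (\<Sum>a\<in>Ty. tauT a (\<lambda>_. 0) (\<lambda>_. 0))"
  proof
    fix x :: dom
    obtain a' G H where x: "x = (a', G, H)" by (cases x) auto
    show "unitT x = (\<Sum>a\<in>Ty. tauT a (\<lambda>_. 0) (\<lambda>_. 0)) x"
      using finite_Ty by (simp add: sum_fun_apply x tauT_def unitT_def)
  qed
  moreover have "tauT a (\<lambda>_. 0) (\<lambda>_. 0) \<in> Gen 0 0" if "a \<in> Ty" for a
    unfolding Gen_def using that
    by (intro image_eqI[of _ _ "(a, \<lambda>_. 0, \<lambda>_. 0)"]) (auto simp: Expo_def)
  ultimately show ?thesis by (metis (no_types, lifting) fvs.span_base fvs.span_sum)
qed

lemma psiT_span: "psiT v \<in> fvs.span (Gen 1 1)"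
proof -
  have eq: "psiT v = (\<Sum>a\<in>Ty. \<Sum>m1\<in>Ma a. \<Sum>m2\<in>Mb a. if m1 + m2 = v then tauT a (dlt m1 1) (dlt m2 1) else 0)"
  proof
    fix x :: dom
    obtain a' G H where x: "x = (a', G, H)" by (cases x) auto
    have "(\<Sum>a\<in>Ty. \<Sum>m1\<in>Ma a. \<Sum>m2\<in>Mb a. if m1 + m2 = v then tauT a (dlt m1 1) (dlt m2 1) else 0) x
      = (\<Sum>a\<in>Ty. \<Sum>m1\<in>Ma a. \<Sum>m2\<in>Mb a. if m1 + m2 = v then tauT a (dlt m1 1) (dlt m2 1) x else 0)"
      by (simp add: sum_fun_apply if_fun_apply)
    also have "\<dots> = (\<Sum>a\<in>Ty. if a' = a then psi a v G H else 0)"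
    proof (rule sum.cong[OF refl])
      fix a assume a: "a \<in> Ty"
      have "(\<Sum>m1\<in>Ma a. \<Sum>m2\<in>Mb a. if m1 + m2 = v then tauT a (dlt m1 1) (dlt m2 1) x else 0)
        = (\<Sum>m1\<in>Ma a. \<Sum>m2\<in>Mb a. if a' = a then (if m1 + m2 = v then G m1 * H m2 else 0) else 0)"
        using MS_Ty[OF a] by (intro sum.cong refl) (auto simp: tauT_def x prod_dlt')
      also have "\<dots> = (if a' = a then psi a v G H else 0)"
        by (simp add: psi_def)
      finally show "(\<Sum>m1\<in>Ma a. \<Sum>m2\<in>Mb a. if m1 + m2 = v then tauT a (dlt m1 1) (dlt m2 1) x else 0)
        = (if a' = a then psi a v G H else 0)" .
    qed
    also have "\<dots> = psiT v x"
      using finite_Ty by (simp add: psiT_def x)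
    finally show "psiT v x = (\<Sum>a\<in>Ty. \<Sum>m1\<in>Ma a. \<Sum>m2\<in>Mb a. if m1 + m2 = v then tauT a (dlt m1 1) (dlt m2 1) else 0) x" by simp
  qed
  have gen: "tauT a (dlt m1 1) (dlt m2 1) \<in> Gen 1 1" if "a \<in> Ty" "m1 \<in> Ma a" "m2 \<in> Mb a" for a m1 m2
    unfolding Gen_def using that MS_Ty[OF that(1)]
    by (intro image_eqI[of _ _ "(a, dlt m1 1, dlt m2 1)"]) (auto intro: dlt_Expo)
  have gen': "(if m1 + m2 = v then tauT a (dlt m1 1) (dlt m2 1) else 0) \<in> fvs.span (Gen 1 1)"
    if "a \<in> Ty" "m1 \<in> Ma a" "m2 \<in> Mb a" for a m1 m2
    using gen[OF that] by (simp add: fvs.span_zero fvs.span_base)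
  show ?thesis unfolding eq
    by (intro fvs.span_sum gen')
qed

lemma pow_span:
  assumes "f \<in> fvs.span (Gen p p)"
  shows "(\<lambda>x. f x * psiT w x ^ j) \<in> fvs.span (Gen (p+j) (p+j))"
proof (induction j)
  case 0 then show ?case using assms by simp
next
  case (Suc j)
  have "(\<lambda>x. (f x * psiT w x ^ j) * psiT w x) \<in> fvs.span (Gen (p+j+1) (p+j+1))"
    using span_mult[OF Suc psiT_span] by simp
  then show ?case by (simp add: mult_ac)
qed

lemma PhiT_span_gen:
  assumes "finite V"
  shows "(\<lambda>x. unitT x * (\<Prod>v\<in>V. psiT v x ^ \<alpha> v)) \<in> fvs.span (Gen (sum \<alpha> V) (sum \<alpha> V))"
  using assms
proof (induction V rule: finite_induct)
  case empty
  then show ?case using unitT_span by simp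
next
  case (insert w V)
  have "(\<lambda>x. (unitT x * (\<Prod>v\<in>V. psiT v x ^ \<alpha> v)) * psiT w x ^ \<alpha> w)
      \<in> fvs.span (Gen (sum \<alpha> V + \<alpha> w) (sum \<alpha> V + \<alpha> w))"
    by (rule pow_span[OF insert.IH])
  then show ?case using insert.hyps by (simp add: mult_ac add.commute)
qed

lemma PhiT_span: "PhiT \<alpha> \<in> fvs.span (Gen (sum \<alpha> Md) (sum \<alpha> Md))"
  unfolding PhiT_def by (rule PhiT_span_gen[OF finite_Md])

end


lemma arith_key:
  fixes N K c :: nat
  assumes "2 \<le> N" "c = K * (N-1)^(N-2) + 1"
  shows "K * (c*(N-1)+1)^(N-2) < (c+1)^(N-1)"
proof -
  have N1: "1 \<le> N - 1" using assms(1) by simp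
  have "c*(N-1)+1 \<le> c*(N-1) + (N-1)" using N1 by simp
  also have "\<dots> = (c+1)*(N-1)"
  proof -
    have "\<And>x::nat. c*x + x = (c+1)*x" by (simp add: algebra_simps)
    then show ?thesis .
  qed
  finally have "c*(N-1)+1 \<le> (c+1)*(N-1)" .
  then have "(c*(N-1)+1)^(N-2) \<le> ((c+1)*(N-1))^(N-2)" by (rule power_mono) simp
  also have "\<dots> = (N-1)^(N-2) * (c+1)^(N-2)" by (subst power_mult_distrib) (rule mult.commute)
  finally have "K * (c*(N-1)+1)^(N-2) \<le> (K * (N-1)^(N-2)) * (c+1)^(N-2)"
    by (simp add: mult.assoc mult_left_mono)
  also have "\<dots> < (c+1) * (c+1)^(N-2)"
    using assms(2) by (intro mult_strict_right_mono) auto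
  also have "\<dots> = (c+1)^(N-1)"
  proof -
    have "N - 1 = Suc (N - 2)" using assms(1) by simp
    then show ?thesis by simp
  qed
  finally show ?thesis .
qed

definition Qp :: "('v \<Rightarrow> nat) set \<Rightarrow> (('v \<Rightarrow> nat) \<Rightarrow> complex) \<Rightarrow> (('v \<Rightarrow>\<^sub>0 nat) \<Rightarrow>\<^sub>0 complex)" where
  "Qp S lam = Abs_poly_mapping (\<lambda>E. if Poly_Mapping.lookup E \<in> S then lam (Poly_Mapping.lookup E) else 0)"

lemma eval_Qp:
  fixes S :: "(mono \<Rightarrow> nat) set"
  assumes fS: "finite S" and fM: "finite M" and sub: "\<forall>\<alpha>\<in>S. \<forall>m. m \<notin> M \<longrightarrow> \<alpha> m = 0"
  shows "eval_coord_poly (Qp S lam) c = (\<Sum>\<alpha>\<in>S. lam \<alpha> * (\<Prod>v\<in>M. c v ^ \<alpha> v))"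
proof -
  define f where "f = (\<lambda>E. if Poly_Mapping.lookup E \<in> S then lam (Poly_Mapping.lookup E) else 0)"
  let ?AS = "Abs_poly_mapping ` S"
  have sub': "\<And>\<alpha> m. \<alpha> \<in> S \<Longrightarrow> m \<notin> M \<Longrightarrow> \<alpha> m = 0" using sub by blast
  have finsupp: "finite {v. \<alpha> v \<noteq> 0}" if "\<alpha> \<in> S" for \<alpha>
  proof -
    have "{v. \<alpha> v \<noteq> 0} \<subseteq> M"
    proof
      fix v assume "v \<in> {v. \<alpha> v \<noteq> 0}" then show "v \<in> M" using sub'[OF that, of v] by (cases "v \<in> M") auto
    qed
    then show ?thesis using fM by (rule finite_subset)
  qed
  have lk: "Poly_Mapping.lookup (Abs_poly_mapping \<alpha>) = \<alpha>" if "\<alpha> \<in> S" for \<alpha>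
    using finsupp[OF that] by simp
  have suppf: "{E. f E \<noteq> 0} \<subseteq> ?AS"
  proof
    fix E assume "E \<in> {E. f E \<noteq> 0}"
    then have "Poly_Mapping.lookup E \<in> S" by (auto simp: f_def split: if_splits)
    moreover have "E = Abs_poly_mapping (Poly_Mapping.lookup E)" by simp
    ultimately show "E \<in> ?AS" by blast
  qed
  have finAS: "finite ?AS" using fS by simp
  have lQ: "Poly_Mapping.lookup (Qp S lam) = f"
    unfolding Qp_def f_def[symmetric] using finite_subset[OF suppf finAS] by simp
  have keysQ: "Poly_Mapping.keys (Qp S lam) \<subseteq> ?AS"
    using suppf by (auto simp: in_keys_iff lQ)
  have inj: "inj_on Abs_poly_mapping S"
  proof (rule inj_onI)
    fix \<alpha> \<beta> assume "\<alpha> \<in> S" "\<beta> \<in> S" "Abs_poly_mapping \<alpha> = Abs_poly_mapping \<beta>"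
    then have "Poly_Mapping.lookup (Abs_poly_mapping \<alpha>) = Poly_Mapping.lookup (Abs_poly_mapping \<beta>)" by simp
    then show "\<alpha> = \<beta>" using lk \<open>\<alpha> \<in> S\<close> \<open>\<beta> \<in> S\<close> by simp
  qed
  let ?P = "\<lambda>E. (\<Prod>v\<in>Poly_Mapping.keys E. c v ^ Poly_Mapping.lookup E v)"
  have "eval_coord_poly (Qp S lam) c = (\<Sum>E\<in>Poly_Mapping.keys (Qp S lam). f E * ?P E)"
    by (simp add: eval_coord_poly_def lQ)
  also have "\<dots> = (\<Sum>E\<in>?AS. f E * ?P E)"
    by (rule sum.mono_neutral_left[OF finAS keysQ]) (auto simp: in_keys_iff lQ)
  also have "\<dots> = (\<Sum>\<alpha>\<in>S. f (Abs_poly_mapping \<alpha>) * ?P (Abs_poly_mapping \<alpha>))"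
    by (rule sum.reindex[OF inj, unfolded comp_def])
  also have "\<dots> = (\<Sum>\<alpha>\<in>S. lam \<alpha> * (\<Prod>v\<in>M. c v ^ \<alpha> v))"
  proof (rule sum.cong[OF refl])
    fix \<alpha> assume a: "\<alpha> \<in> S"
    have "f (Abs_poly_mapping \<alpha>) = lam \<alpha>" using a lk[OF a] by (simp add: f_def)
    moreover have "?P (Abs_poly_mapping \<alpha>) = (\<Prod>v\<in>M. c v ^ \<alpha> v)"
    proof -
      have ks: "Poly_Mapping.keys (Abs_poly_mapping \<alpha>) \<subseteq> M"
      proof
        fix v assume "v \<in> Poly_Mapping.keys (Abs_poly_mapping \<alpha>)"
        then have "\<alpha> v \<noteq> 0" by (simp add: in_keys_iff lk[OF a])
        then show "v \<in> M" using sub'[OF a, of v] by (cases "v \<in> M") auto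
      qed
      have "?P (Abs_poly_mapping \<alpha>) = (\<Prod>v\<in>Poly_Mapping.keys (Abs_poly_mapping \<alpha>). c v ^ \<alpha> v)"
        by (simp add: lk[OF a])
      also have "\<dots> = (\<Prod>v\<in>M. c v ^ \<alpha> v)"
        by (rule prod.mono_neutral_left[OF fM ks]) (auto simp: in_keys_iff lk[OF a])
      finally show ?thesis .
    qed
    ultimately show "f (Abs_poly_mapping \<alpha>) * ?P (Abs_poly_mapping \<alpha>) = lam \<alpha> * (\<Prod>v\<in>M. c v ^ \<alpha> v)"
      by simp
  qed
  finally show ?thesis .
qed

context P51
begin

lemma Ma_nonempty: assumes "a \<in> Ty" shows "1 \<le> card (Ma a)" "1 \<le> card (Mb a)"
proof -
  have a: "\<forall>i<k. 0 \<le> a i \<and> a i \<le> d i" using assms by (simp add: Ty_def)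
  have "card (Ma a) = (\<Prod>i<k. card (Expo {..n i} (nat (a i))))" using card_MS[of k a n] a by simp
  also have "\<dots> \<ge> 1" by (intro prod_ge_1) (rule card_Expo_pos; simp)
  finally show "1 \<le> card (Ma a)" .
  have "card (Mb a) = (\<Prod>i<k. card (Expo {..n i} (nat (d i - a i))))"
    using card_MS[of k "\<lambda>i. d i - a i" n] a by simp
  also have "\<dots> \<ge> 1" by (intro prod_ge_1) (rule card_Expo_pos; simp)
  finally show "1 \<le> card (Mb a)" .
qed

lemma finite_Gen: "finite (Gen p q)"
  unfolding Gen_def using finite_Ty MS_Ty by (auto intro!: finite_SigmaI finite_Expo)

lemma card_Gen:
  assumes "1 \<le> e"
  shows "card (Gen e e) \<le> card Ty * (e+1)^(card Md - 2)"
proof -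
  let ?Sg = "SIGMA a:Ty. Expo (Ma a) e \<times> Expo (Mb a) e"
  have "card (Gen e e) \<le> card ?Sg" unfolding Gen_def by (rule card_image_le)
    (use finite_Ty MS_Ty in \<open>auto intro!: finite_SigmaI finite_Expo\<close>)
  also have "card ?Sg = (\<Sum>a\<in>Ty. card (Expo (Ma a) e) * card (Expo (Mb a) e))"
    using finite_Ty MS_Ty by (subst card_SigmaI) (auto intro!: finite_Expo simp: card_cartesian_product)
  also have "\<dots> \<le> (\<Sum>a\<in>Ty. (e+1)^(card Md - 2))"
  proof (rule sum_mono)
    fix a assume a: "a \<in> Ty"
    have "card (Expo (Ma a) e) * card (Expo (Mb a) e) \<le> (e+1)^(card (Ma a) - 1) * (e+1)^(card (Mb a) - 1)"
      using MS_Ty[OF a] assms by (intro mult_mono card_Expo_le) auto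
    also have "\<dots> = (e+1)^(card (Ma a) - 1 + (card (Mb a) - 1))" by (simp add: power_add)
    also have "\<dots> \<le> (e+1)^(card Md - 2)"
      using card_add[OF a] Ma_nonempty[OF a] by (intro power_increasing) auto
    finally show "card (Expo (Ma a) e) * card (Expo (Mb a) e) \<le> (e+1)^(card Md - 2)" .
  qed
  also have "\<dots> = card Ty * (e+1)^(card Md - 2)" by simp
  finally show ?thesis .
qed

lemma exists_lam:
  "\<exists>e lam. 1 \<le> e \<and> (\<exists>\<alpha>\<in>Expo Md e. lam \<alpha> \<noteq> 0) \<and> (\<forall>x. (\<Sum>\<alpha>\<in>Expo Md e. lam \<alpha> * PhiT \<alpha> x) = 0)"
proof -
  define N where "N = card Md"
  define K where "K = card Ty"
  define c where "c = K * (N-1)^(N-2) + 1"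
  define e where "e = c * (N-1)"
  have N2: "2 \<le> N" using card_Md_ge2 by (simp add: N_def)
  have e1: "1 \<le> e" using N2 by (simp add: e_def c_def)
  have "Md \<noteq> {}" using N2 unfolding N_def by (intro notI) simp
  then obtain x0 where x0: "x0 \<in> Md" by blast
  have "card (Gen e e) \<le> K * (e+1)^(N-2)" using card_Gen[OF e1] by (simp add: K_def N_def)
  also have "\<dots> < (c+1)^(N-1)" unfolding e_def by (rule arith_key[OF N2 c_def])
  also have "\<dots> \<le> card (Expo Md e)"
    unfolding e_def N_def using card_Expo_ge[OF finite_Md x0, of c] by simp
  finally have lt: "card (Gen e e) < card (Expo Md e)" .
  have sp: "PhiT ` Expo Md e \<subseteq> fvs.span (Gen e e)"
    using PhiT_span by (auto simp: Expo_def)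
  from dep_lemma[OF finite_Expo[OF finite_Md] finite_Gen lt sp]
  show ?thesis using e1 by blast
qed

lemma vanish:
  assumes lam: "\<forall>x. (\<Sum>\<alpha>\<in>Expo Md e. lam \<alpha> * PhiT \<alpha> x) = 0"
    and a: "a \<in> Ty" and g: "Poly_Mapping.keys g \<subseteq> Ma a" and h: "Poly_Mapping.keys h \<subseteq> Mb a"
  shows "eval_coord_poly (Qp (Expo Md e) lam) (Poly_Mapping.lookup (g * h)) = 0"
proof -
  have ev: "eval_coord_poly (Qp (Expo Md e) lam) (Poly_Mapping.lookup (g * h))
      = (\<Sum>\<alpha>\<in>Expo Md e. lam \<alpha> * (\<Prod>v\<in>Md. Poly_Mapping.lookup (g * h) v ^ \<alpha> v))"
    by (rule eval_Qp[OF finite_Expo[OF finite_Md] finite_Md]) (auto simp: Expo_def)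
  have "Poly_Mapping.lookup (g * h) v = psi a v (Poly_Mapping.lookup g) (Poly_Mapping.lookup h)" for v
    unfolding psi_def by (rule lookup_mult_fin[OF MS_Ty[OF a] g h])
  then have "(\<Prod>v\<in>Md. Poly_Mapping.lookup (g * h) v ^ \<alpha> v) = PhiT \<alpha> (a, Poly_Mapping.lookup g, Poly_Mapping.lookup h)" for \<alpha>
    using a by (simp add: PhiT_def unitT_def psiT_def)
  then show ?thesis using ev lam by simp
qed

lemma exists_u0:
  assumes "\<exists>\<alpha>\<in>Expo Md e. lam \<alpha> \<noteq> 0"
  shows "\<exists>u0\<in>sections n k d. eval_coord_poly (Qp (Expo Md e) lam) (Poly_Mapping.lookup u0) \<noteq> 0"
proof -
  let ?S = "Expo Md e"
  have "\<not> (\<forall>c::mono\<Rightarrow>complex. (\<Sum>\<alpha>\<in>?S. lam \<alpha> * (\<Prod>v\<in>Md. c v ^ \<alpha> v)) = 0)"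
  proof
    assume "\<forall>c::mono\<Rightarrow>complex. (\<Sum>\<alpha>\<in>?S. lam \<alpha> * (\<Prod>v\<in>Md. c v ^ \<alpha> v)) = 0"
    moreover have "\<forall>\<alpha>\<in>?S. \<forall>\<beta>\<in>?S. (\<forall>v\<in>Md. \<alpha> v = \<beta> v) \<longrightarrow> \<alpha> = \<beta>"
    proof (intro ballI impI)
      fix \<alpha> \<beta> assume a: "\<alpha> \<in> ?S" and b: "\<beta> \<in> ?S" and e: "\<forall>v\<in>Md. \<alpha> v = \<beta> v"
      show "\<alpha> = \<beta>"
      proof
        fix v show "\<alpha> v = \<beta> v" using a b e by (cases "v \<in> Md") (auto simp: Expo_def)
      qed
    qed
    ultimately have "\<forall>\<alpha>\<in>?S. lam \<alpha> = 0"
      using poly_fun_zero[OF finite_Md finite_Expo[OF finite_Md]] by blast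
    then show False using assms by blast
  qed
  then obtain c :: "mono \<Rightarrow> complex" where c: "(\<Sum>\<alpha>\<in>?S. lam \<alpha> * (\<Prod>v\<in>Md. c v ^ \<alpha> v)) \<noteq> 0" by blast
  define u0 :: cpoly where "u0 = (\<Sum>v\<in>Md. Poly_Mapping.single v (c v))"
  have lu: "Poly_Mapping.lookup u0 v = c v" if "v \<in> Md" for v
    using that finite_Md by (simp add: u0_def lookup_sum lookup_single when_def)
  have "Poly_Mapping.keys u0 \<subseteq> Md" unfolding u0_def by (rule keys_sum_single_sub) simp
  then have u0s: "u0 \<in> sections n k d" by (simp add: sections_MS)
  have "eval_coord_poly (Qp ?S lam) (Poly_Mapping.lookup u0) = (\<Sum>\<alpha>\<in>?S. lam \<alpha> * (\<Prod>v\<in>Md. Poly_Mapping.lookup u0 v ^ \<alpha> v))"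
    by (rule eval_Qp[OF finite_Expo[OF finite_Md] finite_Md]) (auto simp: Expo_def)
  also have "\<dots> = (\<Sum>\<alpha>\<in>?S. lam \<alpha> * (\<Prod>v\<in>Md. c v ^ \<alpha> v))" by (simp add: lu)
  finally have "eval_coord_poly (Qp ?S lam) (Poly_Mapping.lookup u0) \<noteq> 0" using c by simp
  with u0s show ?thesis by blast
qed

end


context P51
begin

lemma MS_restrict:
  "MS n k (\<lambda>i. if i < k then a i else 0) = MS n k a"
  "MS n k (\<lambda>i. d i - (if i < k then a i else 0)) = MS n k (\<lambda>i. d i - a i)"
  by (auto simp: MS_def)

lemma MS_empty_neg: assumes "i < k" "a i < 0" shows "MS n k a = {}"
proof -
  have False if "m \<in> MS n k a" for m
  proof -
    have "int (block_deg n m i) = a i" using that assms(1) by (simp add: MS_def)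
    then show False using assms(2) by linarith
  qed
  then show ?thesis by blast
qed

lemma decomp1_zero:
  assumes lam: "\<forall>x. (\<Sum>\<alpha>\<in>Expo Md e. lam \<alpha> * PhiT \<alpha> x) = 0"
    and dec: "strength_decomp n k d u 1"
  shows "eval_coord_poly (Qp (Expo Md e) lam) (Poly_Mapping.lookup u) = 0"
proof -
  obtain a x y where
    c: "nontrivial_deg k (a 0)" "nontrivial_deg k (\<lambda>i. d i - a 0 i)"
       "x 0 \<in> sections n k (a 0)" "y 0 \<in> sections n k (\<lambda>i. d i - a 0 i)"
    and u: "u = x 0 * y 0"
    using dec unfolding strength_decomp_def by auto
  have zero_case: "eval_coord_poly (Qp (Expo Md e) lam) (Poly_Mapping.lookup (0::cpoly)) = 0"
    using vanish[OF lam e0_Ty, of 0 0] by simp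
  show ?thesis
  proof (cases "\<forall>i<k. 0 \<le> a 0 i \<and> a 0 i \<le> d i")
    case True
    define a' where "a' = (\<lambda>i. if i < k then a 0 i else 0)"
    have "a' \<in> Ty"
      using True c unfolding Ty_def a'_def nontrivial_deg_def by auto
    moreover have "Poly_Mapping.keys (x 0) \<subseteq> Ma a'"
      using c(3) by (simp add: sections_MS a'_def MS_restrict)
    moreover have "Poly_Mapping.keys (y 0) \<subseteq> Mb a'"
      using c(4) by (simp add: sections_MS a'_def MS_restrict)
    ultimately show ?thesis using vanish[OF lam] u by blast
  next
    case False
    then obtain i where i0: "i < k" "\<not> (0 \<le> a 0 i \<and> a 0 i \<le> d i)" by blast
    then have i: "i < k" "a 0 i < 0 \<or> d i - a 0 i < 0" by linarith+
    from i(2) have "x 0 = 0 \<or> y 0 = 0"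
    proof
      assume "a 0 i < 0"
      then have "MS n k (a 0) = {}" using MS_empty_neg i by blast
      then show ?thesis using c(3) by (simp add: sections_MS)
    next
      assume "d i - a 0 i < 0"
      then have "MS n k (\<lambda>i. d i - a 0 i) = {}" using MS_empty_neg[of i "\<lambda>i. d i - a 0 i"] i by blast
      then show ?thesis using c(4) by (simp add: sections_MS)
    qed
    then have "u = 0" using u by auto
    then show ?thesis using zero_case by simp
  qed
qed

theorem main:
  "(\<forall>u \<in> sections n k d. u \<noteq> 0 \<longrightarrow> strength n k d u \<le> 2)
    \<and> (\<exists>P. (\<exists>u0 \<in> sections n k d. eval_coord_poly P (Poly_Mapping.lookup u0) \<noteq> 0)
          \<and> (\<forall>u \<in> sections n k d. eval_coord_poly P (Poly_Mapping.lookup u) \<noteq> 0 \<longrightarrow> strength n k d u = 2))"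
proof -
  have le2: "strength n k d u \<le> 2" if "u \<in> sections n k d" for u
  proof -
    have "enat 2 \<in> {enat r | r. r \<ge> 1 \<and> strength_decomp n k d u r}" using part1[OF that] by auto
    then have "Inf {enat r | r. r \<ge> 1 \<and> strength_decomp n k d u r} \<le> enat 2" by (rule Inf_lower)
    then show ?thesis unfolding strength_def by (simp add: numeral_eq_enat)
  qed
  obtain e lam where e: "1 \<le> e" "\<exists>\<alpha>\<in>Expo Md e. lam \<alpha> \<noteq> 0"
    and lam: "\<forall>x. (\<Sum>\<alpha>\<in>Expo Md e. lam \<alpha> * PhiT \<alpha> x) = 0"
    using exists_lam by blast
  define P where "P = Qp (Expo Md e) lam"
  have "strength n k d u = 2" if u: "u \<in> sections n k d" and ev: "eval_coord_poly P (Poly_Mapping.lookup u) \<noteq> 0" for u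
  proof (rule antisym)
    show "strength n k d u \<le> 2" by (rule le2[OF u])
    show "2 \<le> strength n k d u"
      unfolding strength_def
    proof (rule Inf_greatest)
      fix z assume "z \<in> {enat r | r. r \<ge> 1 \<and> strength_decomp n k d u r}"
      then obtain r where r: "z = enat r" "r \<ge> 1" "strength_decomp n k d u r" by blast
      have "r \<noteq> 1"
      proof
        assume "r = 1"
        then have "eval_coord_poly P (Poly_Mapping.lookup u) = 0"
          unfolding P_def using decomp1_zero[OF lam] r by simp
        then show False using ev by simp
      qed
      then have "2 \<le> r" using r by simp
      then show "2 \<le> z" using r by (simp add: numeral_eq_enat)
    qed
  qed
  moreover have "\<exists>u0 \<in> sections n k d. eval_coord_poly P (Poly_Mapping.lookup u0) \<noteq> 0"
    unfolding P_def by (rule exists_u0[OF e(2)])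
  ultimately have "(\<exists>u0 \<in> sections n k d. eval_coord_poly P (Poly_Mapping.lookup u0) \<noteq> 0)
          \<and> (\<forall>u \<in> sections n k d. eval_coord_poly P (Poly_Mapping.lookup u) \<noteq> 0 \<longrightarrow> strength n k d u = 2)"
    by blast
  then show ?thesis using le2 by (intro conjI ballI impI exI[of _ P]) auto
qed

end

theorem proposition5p1:
  fixes k :: nat and n :: "nat \<Rightarrow> nat" and d :: "nat \<Rightarrow> int"
  assumes "k \<ge> 2"
    and "\<forall>i<k. n i \<ge> 1"
    and "n 0 = 1"
    and "\<forall>i<k. d i \<ge> 1"
  shows "(\<forall>u \<in> sections n k d. u \<noteq> 0 \<longrightarrow> strength n k d u \<le> 2)
    \<and> (\<exists>P. (\<exists>u0 \<in> sections n k d. eval_coord_poly P (Poly_Mapping.lookup u0) \<noteq> 0)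
          \<and> (\<forall>u \<in> sections n k d. eval_coord_poly P (Poly_Mapping.lookup u) \<noteq> 0 \<longrightarrow> strength n k d u = 2))"
proof -
  interpret P51 k n d using assms by unfold_locales
  show ?thesis by (rule main)
qed


end
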